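(* Fix $\delta>0$. For $\pi\in\{\texttt{G-HCLA},\texttt{GP-HCLA}\}$, the set $\mathcal B=\{t\ge1:|U(G(t);\hat\mu(t))-U(G(t);\mu)|\ge\delta\}$ satisfies $\mathbb E[|\mathcal B|]\le 4MK+\frac{2M^3K}{\delta^2}$.
   Context: Model: $M$ agents, $K>M$ arms; pair $(m,k)$ has a Bernoulli distribution of mean $\mu_{m,k}\in[0,1]$. Each round each agent pulls an arm (assignment $G(t)$ of arms $k^G_m$ to agents, a "matching"; $\mathcal G$ the set of assignments); an agent receives an independent Bernoulli sample of its arm if no other agent pulls that arm, else $0$. Each agent may also query one arm per round as a hint, observing an independent sample. $U(G;w)=\sum_m w_{m,k^G_m}\mathbb 1\{\forall m'\ne m:k^G_{m'}\ne k^G_m\}$; $G^*=\arg\max U(G;\mu)$ unique. $\mathrm{kl}$ is the Bernoulli KL divergence, $f(t)=\log t+4\log\log t$. Covering matchings $R_i$ ($i\le K$) match agent $m$ to arm $((m+i-2)\bmod K)+1$, $\mathcal R=\{R_i\}$. $\texttt{Hungarian}(w)$ returns an assignment of agents to distinct arms maximizing $\sum_m w_{m,k^G_m}$. Both algorithms are centralized and maintain per edge $N_{m,k}(t)$ (number of observations of $(m,k)$ from pulls and hints before $t$), their empirical mean $\hat\mu_{m,k}(t)$, and $d_{m,k}(t)=\sup\{q\ge0:N_{m,k}(t)\mathrm{kl}(\hat\mu_{m,k}(t),q)\le f(t)\}$ (initialized to $0$). At round $t$: $G(t)=\texttt{Hungarian}(\hat\mu(t))$, $G'(t)=\texttt{Hungarian}(d(t))$;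 if $U(G'(t);d(t))>U(G(t);\hat\mu(t))$ a hint matching $G^{\mathrm{hint}}(t)$ is chosen and each agent queries its arm in it; then agents pull per $G(t)$ and update. In $\texttt{GP-HCLA}$, $G^{\mathrm{hint}}(t)$ is, w.p. $1/2$ each, either the $R\in\mathcal R$ containing an edge of $G'(t)$ with minimal $N_{m,k}(t)$, or a uniformly random element of $\mathcal R$. In $\texttt{G-HCLA}$, $G^{\mathrm{hint}}(t)$ is, w.p. $1/2$ each, either $G'(t)$ or a uniformly random element of $\mathcal R$. *)

theory Defs
  imports "HOL-Probability.Probability"
begin

text \<open>Agents are 1..M, arms are 1..K. An assignment maps each agent to an arm
(extensional outside {1..M}).\<close>

type_synonym assignment = "nat \<Rightarrow> nat"
type_synonym weights = "nat \<Rightarrow> nat \<Rightarrow> real"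
type_synonym hstate = "(nat \<Rightarrow> nat \<Rightarrow> nat) \<times> (nat \<Rightarrow> nat \<Rightarrow> nat)"
  \<comment> \<open>(N, S): numbers of observations and sums of observed samples per edge\<close>
type_synonym round_rand = "bool \<times> nat \<times> (nat \<times> nat \<Rightarrow> bool) \<times> (nat \<times> nat \<Rightarrow> bool)"
  \<comment> \<open>(coin, uniform index into the covering matchings, hint samples, pull samples)\<close>

datatype algo = G_HCLA | GP_HCLA

definition assignments :: "nat \<Rightarrow> nat \<Rightarrow> assignment set" where
  "assignments M K = ({1..M} \<rightarrow>\<^sub>E {1..K})"

definition matchings :: "nat \<Rightarrow> nat \<Rightarrow> assignment set" where
  "matchings M K = {G \<in> assignments M K. inj_on G {1..M}}"

definition utility :: "nat \<Rightarrow> assignment \<Rightarrow> weights \<Rightarrow> real" where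
  "utility M G w = (\<Sum>m\<in>{1..M}. w m (G m) *
      (if (\<forall>m'\<in>{1..M}. m' \<noteq> m \<longrightarrow> G m' \<noteq> G m) then 1 else 0))"

definition is_hungarian :: "nat \<Rightarrow> nat \<Rightarrow> (weights \<Rightarrow> assignment) \<Rightarrow> bool" where
  "is_hungarian M K hung \<longleftrightarrow> (\<forall>w. hung w \<in> matchings M K \<and>
     (\<forall>G\<in>matchings M K. (\<Sum>m\<in>{1..M}. w m (G m)) \<le> (\<Sum>m\<in>{1..M}. w m (hung w m))))"

definition covering :: "nat \<Rightarrow> nat \<Rightarrow> nat \<Rightarrow> assignment" where
  "covering M K i = (\<lambda>m. if m \<in> {1..M} then ((m + i - 2) mod K) + 1 else undefined)"

definition coverings :: "nat \<Rightarrow> nat \<Rightarrow> assignment set" where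
  "coverings M K = covering M K ` {1..K}"

definition is_min_selector :: "nat \<Rightarrow> ((nat \<Rightarrow> nat \<Rightarrow> nat) \<Rightarrow> assignment \<Rightarrow> nat) \<Rightarrow> bool" where
  "is_min_selector M sel \<longleftrightarrow> (\<forall>N G. sel N G \<in> {1..M} \<and>
     (\<forall>m\<in>{1..M}. N (sel N G) (G (sel N G)) \<le> N m (G m)))"

definition xlr :: "real \<Rightarrow> real \<Rightarrow> ereal" where
  "xlr a b = (if a = 0 then 0 else if b = 0 then \<infinity> else ereal (a * ln (a / b)))"

definition kl :: "real \<Rightarrow> real \<Rightarrow> ereal" where
  "kl p q = xlr p q + xlr (1 - p) (1 - q)"

text \<open>f(t) = log t + 4 log log t; for t = 1 (where it equals -\<infinity>) a negative value is used,
which has the same effect in the definition of d.\<close>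
definition fexp :: "nat \<Rightarrow> real" where
  "fexp t = (if t \<le> 1 then -1 else ln (real t) + 4 * ln (ln (real t)))"

definition muhat :: "hstate \<Rightarrow> weights" where
  "muhat st m k = (if fst st m k = 0 then 0 else real (snd st m k) / real (fst st m k))"

definition dval :: "nat \<Rightarrow> hstate \<Rightarrow> weights" where
  "dval t st m k = (let A = {q::real. 0 \<le> q \<and> q \<le> 1 \<and>
        ereal (real (fst st m k)) * kl (muhat st m k) q \<le> ereal (fexp t)}
     in if A = {} then 0 else Sup A)"

definition hint_matching :: "algo \<Rightarrow> nat \<Rightarrow> nat \<Rightarrow> ((nat \<Rightarrow> nat \<Rightarrow> nat) \<Rightarrow> assignment \<Rightarrow> nat)
    \<Rightarrow> hstate \<Rightarrow> assignment \<Rightarrow> bool \<Rightarrow> nat \<Rightarrow> assignment" where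
  "hint_matching alg M K sel st G' c r =
     (if c then (case alg of
          G_HCLA \<Rightarrow> G'
        | GP_HCLA \<Rightarrow> (let m = sel (fst st) G' in
             THE R. R \<in> coverings M K \<and> R m = G' m))
      else covering M K r)"

definition step :: "algo \<Rightarrow> nat \<Rightarrow> nat \<Rightarrow> (weights \<Rightarrow> assignment)
    \<Rightarrow> ((nat \<Rightarrow> nat \<Rightarrow> nat) \<Rightarrow> assignment \<Rightarrow> nat) \<Rightarrow> nat \<Rightarrow> hstate \<Rightarrow> round_rand \<Rightarrow> hstate" where
  "step alg M K hung sel t st \<omega> =
     (let (c, r, h, p) = \<omega>; N = fst st; S = snd st;
          mh = muhat st; d = dval t st; G = hung mh; G' = hung d;
          hon = (utility M G' d > utility M G mh);
          H = hint_matching alg M K sel st G' c r;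
          hint_edge = (\<lambda>m k. hon \<and> m \<in> {1..M} \<and> H m = k);
          pull_edge = (\<lambda>m k. m \<in> {1..M} \<and> G m = k \<and> (\<forall>m'\<in>{1..M}. m' \<noteq> m \<longrightarrow> G m' \<noteq> k))
      in (\<lambda>m k. N m k + (if hint_edge m k then 1 else 0) + (if pull_edge m k then 1 else 0),
          \<lambda>m k. S m k + (if hint_edge m k \<and> h (m, k) then 1 else 0)
                     + (if pull_edge m k \<and> p (m, k) then 1 else 0)))"

text \<open>hist ... \<omega> n = state (N, S) after rounds 1..n, i.e. the state at the start of round n+1.
Round t uses the randomness \<omega> t.\<close>
primrec hist :: "algo \<Rightarrow> nat \<Rightarrow> nat \<Rightarrow> (weights \<Rightarrow> assignment)
    \<Rightarrow> ((nat \<Rightarrow> nat \<Rightarrow> nat) \<Rightarrow> assignment \<Rightarrow> nat) \<Rightarrow> (nat \<Rightarrow> round_rand) \<Rightarrow> nat \<Rightarrow> hstate" where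
  "hist alg M K hung sel \<omega> 0 = (\<lambda>_ _. 0, \<lambda>_ _. 0)"
| "hist alg M K hung sel \<omega> (Suc n) =
     step alg M K hung sel (Suc n) (hist alg M K hung sel \<omega> n) (\<omega> (Suc n))"

definition round_pmf :: "nat \<Rightarrow> nat \<Rightarrow> weights \<Rightarrow> round_rand pmf" where
  "round_pmf M K \<mu> =
     bind_pmf (bernoulli_pmf (1/2)) (\<lambda>c.
     bind_pmf (pmf_of_set {1..K}) (\<lambda>r.
     bind_pmf (Pi_pmf ({1..M} \<times> {1..K}) False (\<lambda>(m, k). bernoulli_pmf (\<mu> m k))) (\<lambda>h.
     bind_pmf (Pi_pmf ({1..M} \<times> {1..K}) False (\<lambda>(m, k). bernoulli_pmf (\<mu> m k))) (\<lambda>p.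
     return_pmf (c, r, h, p)))))"

definition process :: "nat \<Rightarrow> nat \<Rightarrow> weights \<Rightarrow> (nat \<Rightarrow> round_rand) measure" where
  "process M K \<mu> = PiM UNIV (\<lambda>_. measure_pmf (round_pmf M K \<mu>))"

definition bad_rounds :: "algo \<Rightarrow> nat \<Rightarrow> nat \<Rightarrow> weights \<Rightarrow> (weights \<Rightarrow> assignment)
    \<Rightarrow> ((nat \<Rightarrow> nat \<Rightarrow> nat) \<Rightarrow> assignment \<Rightarrow> nat) \<Rightarrow> real \<Rightarrow> (nat \<Rightarrow> round_rand) \<Rightarrow> nat set" where
  "bad_rounds alg M K \<mu> hung sel \<delta> \<omega> =
     {t. 1 \<le> t \<and>
        (let st = hist alg M K hung sel \<omega> (t - 1); G = hung (muhat st) in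
         \<bar>utility M G (muhat st) - utility M G \<mu>\<bar> \<ge> \<delta>)}"

end

theory Submission
  imports Defs "HOL-Probability.Stream_Space"
begin

definition badf :: "real \<Rightarrow> real \<Rightarrow> nat \<Rightarrow> nat \<Rightarrow> bool" where
  "badf q \<epsilon> n s \<longleftrightarrow> \<epsilon> \<le> \<bar>(if n = 0 then 0 else real s / real n) - q\<bar>"

definition Vf :: "real \<Rightarrow> real \<Rightarrow> nat \<Rightarrow> nat \<Rightarrow> ennreal" where
  "Vf q \<epsilon> n s = (\<Sum>i. emeasure (measure_pmf (binomial_pmf i q)) {x. badf q \<epsilon> (n+i) (s+x)})"

lemma Vf_harm:
  assumes q: "q \<in> {0..1}"
  shows "Vf q \<epsilon> n s = (if badf q \<epsilon> n s then 1 else 0) +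
     (\<integral>\<^sup>+y. Vf q \<epsilon> (Suc n) (s + (if y then 1 else 0)) \<partial>bernoulli_pmf q)"
proof -
  define f where "f i = emeasure (measure_pmf (binomial_pmf i q)) {x. badf q \<epsilon> (n+i) (s+x)}" for i
  have "Vf q \<epsilon> n s = (\<Sum>i. f (i + 1)) + (\<Sum>i<1. f i)"
    unfolding Vf_def f_def[symmetric] by (rule suminf_offset) simp
  also have "(\<Sum>i<1. f i) = (if badf q \<epsilon> n s then 1 else 0)"
    using q by (simp add: f_def binomial_pmf_0)
  also have "f (i+1) = (\<integral>\<^sup>+y. emeasure (measure_pmf (binomial_pmf i q)) {x. badf q \<epsilon> (Suc n + i) (s + (if y then 1 else 0) + x)} \<partial>bernoulli_pmf q)" for i
  proof -
    have "f (i+1) = (\<integral>\<^sup>+x. indicator {x. badf q \<epsilon> (n+Suc i) (s+x)} x \<partial>binomial_pmf (Suc i) q)"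
      by (simp add: f_def)
    also have "\<dots> = (\<integral>\<^sup>+y. (\<integral>\<^sup>+x. indicator {x. badf q \<epsilon> (n+Suc i) (s+x)} ((if y then 1 else 0) + x) \<partial>binomial_pmf i q) \<partial>bernoulli_pmf q)"
      using q by (simp add: binomial_pmf_Suc)
    also have "\<dots> = (\<integral>\<^sup>+y. emeasure (measure_pmf (binomial_pmf i q)) {x. badf q \<epsilon> (Suc n + i) (s + (if y then 1 else 0) + x)} \<partial>bernoulli_pmf q)"
      by (intro nn_integral_cong) (simp add: nn_integral_indicator[symmetric] indicator_def add.assoc)
    finally show ?thesis .
  qed
  hence "(\<Sum>i. f (i + 1)) = (\<integral>\<^sup>+y. Vf q \<epsilon> (Suc n) (s + (if y then 1 else 0)) \<partial>bernoulli_pmf q)"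
    unfolding Vf_def by (simp add: nn_integral_suminf)
  finally show ?thesis by (simp add: add.commute)
qed

lemma pmf_const_int: "(\<integral>\<^sup>+x. c \<partial>measure_pmf p) = c"
  by (simp add: measure_pmf.emeasure_space_1)

lemma edge_step:
  assumes q: "q \<in> {0..1}"
  shows "(if b \<and> badf q \<epsilon> n s then 1 else 0) +
    (\<integral>\<^sup>+y1. \<integral>\<^sup>+y2. Vf q \<epsilon> (n + (if a then 1 else 0) + (if b then 1 else 0))
        (s + (if a \<and> y1 then 1 else 0) + (if b \<and> y2 then 1 else 0)) \<partial>bernoulli_pmf q \<partial>bernoulli_pmf q)
    \<le> Vf q \<epsilon> n s"
proof (cases a; cases b)
  assume a: a and b: b
  have "(\<integral>\<^sup>+y1. \<integral>\<^sup>+y2. Vf q \<epsilon> (Suc (Suc n)) (s + (if y1 then 1 else 0) + (if y2 then 1 else 0)) \<partial>bernoulli_pmf q \<partial>bernoulli_pmf q)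
     \<le> (\<integral>\<^sup>+y1. Vf q \<epsilon> (Suc n) (s + (if y1 then 1 else 0)) \<partial>bernoulli_pmf q)"
  proof (intro nn_integral_mono)
    fix y1
    show "(\<integral>\<^sup>+y2. Vf q \<epsilon> (Suc (Suc n)) (s + (if y1 then 1 else 0) + (if y2 then 1 else 0)) \<partial>bernoulli_pmf q)
      \<le> Vf q \<epsilon> (Suc n) (s + (if y1 then 1 else 0))"
      using Vf_harm[OF q, of \<epsilon> "Suc n" "s + (if y1 then 1 else 0)"] by (simp add: add_increasing)
  qed
  hence "(if badf q \<epsilon> n s then 1 else 0) + (\<integral>\<^sup>+y1. \<integral>\<^sup>+y2. Vf q \<epsilon> (Suc (Suc n)) (s + (if y1 then 1 else 0) + (if y2 then 1 else 0)) \<partial>bernoulli_pmf q \<partial>bernoulli_pmf q)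
     \<le> Vf q \<epsilon> n s"
    using Vf_harm[OF q, of \<epsilon> n s] by (metis add_left_mono)
  then show ?thesis using a b by simp
next
  assume a: a and b: "\<not> b"
  show ?thesis using a b Vf_harm[OF q, of \<epsilon> n s] by (simp add: pmf_const_int add_increasing)
next
  assume a: "\<not> a" and b: b
  show ?thesis using a b Vf_harm[OF q, of \<epsilon> n s] by (simp add: pmf_const_int)
next
  assume a: "\<not> a" and b: "\<not> b"
  show ?thesis using a b by (simp add: pmf_const_int)
qed

lemma Vf_bound:
  assumes q: "q \<in> {0..1}" and e: "\<epsilon> > 0"
  shows "Vf q \<epsilon> 0 0 \<le> ennreal (1 + 1 / \<epsilon>\<^sup>2)"
proof -
  define f where "f i = emeasure (measure_pmf (binomial_pmf i q)) {x. badf q \<epsilon> (0+i) (0+x)}" for i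
  define x where "x = exp (- 2 * \<epsilon>\<^sup>2)"
  have x0: "0 < x" and x1: "x < 1" using e by (auto simp: x_def)
  have "Vf q \<epsilon> 0 0 = (\<Sum>i. f (i + 1)) + (\<Sum>i<1. f i)"
    unfolding Vf_def f_def[symmetric] by (rule suminf_offset) simp
  also have "(\<Sum>i<1. f i) \<le> 1"
    by (simp add: f_def measure_pmf.emeasure_le_1)
  also have "(\<Sum>i. f (i + 1)) \<le> (\<Sum>i. ennreal (2 * x * x ^ i))"
  proof (intro suminf_le allI)
    fix i
    have "f (i+1) = ennreal (measure_pmf.prob (binomial_pmf (Suc i) q) {x. \<epsilon> \<le> \<bar>real x / real (Suc i) - q\<bar>})"
      by (simp add: f_def badf_def measure_pmf.emeasure_eq_measure del: of_nat_Suc)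
    also have "\<dots> \<le> ennreal (2 * exp (real_of_int (- 2 * int (Suc i)) * \<epsilon>\<^sup>2))"
      using binomial_distribution.prob_abs_ge'[of q "Suc i" \<epsilon>] q e
      by (intro ennreal_leI) (auto simp: binomial_distribution_def)
    also have "exp (real_of_int (- 2 * int (Suc i)) * \<epsilon>\<^sup>2) = x * x ^ i"
    proof -
      have "real_of_int (- 2 * int (Suc i)) * \<epsilon>\<^sup>2 = - 2 * \<epsilon>\<^sup>2 + real i * (- 2 * \<epsilon>\<^sup>2)"
        by (simp add: algebra_simps)
      thus ?thesis unfolding x_def by (simp only: exp_add exp_of_nat_mult)
    qed
    finally show "f (i+1) \<le> ennreal (2 * x * x ^ i)" by (simp add: mult.assoc)
  qed simp_all
  also have "(\<Sum>i. ennreal (2 * x * x ^ i)) = ennreal (\<Sum>i. 2 * x * x ^ i)"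
    using x0 x1 by (intro suminf_ennreal2) (auto intro!: summable_mult summable_geometric)
  also have "(\<Sum>i. 2 * x * x ^ i) = 2 * x / (1 - x)"
    using x0 x1 by (simp add: suminf_mult suminf_geometric summable_geometric)
  also have "2 * x / (1 - x) \<le> 1 / \<epsilon>\<^sup>2"
  proof -
    have "1 + 2 * \<epsilon>\<^sup>2 \<le> exp (2 * \<epsilon>\<^sup>2)" using exp_ge_add_one_self by blast
    hence "x * (1 + 2 * \<epsilon>\<^sup>2) \<le> 1" unfolding x_def
      using x0 by (smt (verit) exp_minus_inverse mult_left_mono x_def)
    hence "2 * x * \<epsilon>\<^sup>2 \<le> 1 - x" by (simp add: algebra_simps)
    thus ?thesis using x1 e by (simp add: field_simps)
  qed
  finally have "Vf q \<epsilon> 0 0 \<le> ennreal (1 / \<epsilon>\<^sup>2) + 1" by (simp add: ennreal_leI)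
  thus ?thesis by (simp add: add.commute ennreal_plus)
qed

primrec chain :: "'s \<Rightarrow> (nat \<Rightarrow> 's \<Rightarrow> 'r \<Rightarrow> 's) \<Rightarrow> 'r stream \<Rightarrow> nat \<Rightarrow> 's" where
  "chain x0 F s 0 = x0"
| "chain x0 F s (Suc n) = F n (chain x0 F s n) (s !! n)"

lemma chain_Cons: "chain x0 F (y ## s) (Suc n) = chain (F 0 x0 y) (\<lambda>n. F (Suc n)) s n"
  by (induction n) simp_all

lemma chain_in_C:
  assumes "x0 \<in> C" "\<And>n st y. st \<in> C \<Longrightarrow> F n st y \<in> C"
  shows "chain x0 F s n \<in> C"
  using assms by (induction n) auto

lemma chain_measurable:
  fixes p :: "'r pmf"
  assumes C: "countable C" "x0 \<in> C" "\<And>n st y. st \<in> C \<Longrightarrow> F n st y \<in> C"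
  shows "(\<lambda>s. chain x0 F s n) \<in> stream_space (measure_pmf p) \<rightarrow>\<^sub>M count_space C"
proof (induction n)
  case 0
  then show ?case using C by simp
next
  case (Suc n)
  have "(\<lambda>s. (\<lambda>i s. F n i (s !! n)) (chain x0 F s n) s) \<in> stream_space (measure_pmf p) \<rightarrow>\<^sub>M count_space C"
  proof (rule measurable_compose_countable'[OF _ Suc C(1)])
    fix i assume i: "i \<in> C"
    have "(\<lambda>y. F n i y) \<in> measure_pmf p \<rightarrow>\<^sub>M count_space C" using C(3)[OF i] by auto
    thus "(\<lambda>s. F n i (s !! n)) \<in> stream_space (measure_pmf p) \<rightarrow>\<^sub>M count_space C"
      by (rule measurable_compose[OF measurable_snth])
  qed
  thus ?case by simp
qed

lemma chain_fun_measurable: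
  fixes p :: "'r pmf"
  assumes C: "countable C" "x0 \<in> C" "\<And>n st y. st \<in> C \<Longrightarrow> F n st y \<in> C"
  shows "(\<lambda>s. g (chain x0 F s n)) \<in> borel_measurable (stream_space (measure_pmf p))"
  by (rule measurable_compose_countable'[where f="\<lambda>i s. g i", OF _ chain_measurable[OF C] C(1)]) simp

lemma chain_bound_T:
  fixes p :: "'r pmf" and c \<Phi> :: "'s \<Rightarrow> ennreal"
  assumes C: "countable C" "x0 \<in> C" "\<And>n st y. st \<in> C \<Longrightarrow> F n st y \<in> C"
    and step: "\<And>n st. st \<in> C \<Longrightarrow> c st + (\<integral>\<^sup>+y. \<Phi> (F n st y) \<partial>p) \<le> \<Phi> st"
  shows "(\<integral>\<^sup>+s. (\<Sum>n<T. c (chain x0 F s n)) + \<Phi> (chain x0 F s T) \<partial>stream_space (measure_pmf p)) \<le> \<Phi> x0"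
  using C step
proof (induction T arbitrary: x0 F)
  case 0
  interpret S: prob_space "stream_space (measure_pmf p)"
    by (rule prob_space.prob_space_stream_space[OF measure_pmf.prob_space_axioms])
  show ?case by (simp add: S.emeasure_space_1)
next
  case (Suc T)
  note C' = Suc.prems(1-3)
  have meas: "(\<lambda>s. (\<Sum>n<Suc T. c (chain x0 F s n)) + \<Phi> (chain x0 F s (Suc T))) \<in> borel_measurable (stream_space (measure_pmf p))"
    using chain_fun_measurable[OF C'] by measurable
  have eq: "(\<Sum>n<Suc T. c (chain x0 F (y ## s) n)) + \<Phi> (chain x0 F (y ## s) (Suc T)) =
     c x0 + ((\<Sum>n<T. c (chain (F 0 x0 y) (\<lambda>n. F (Suc n)) s n)) + \<Phi> (chain (F 0 x0 y) (\<lambda>n. F (Suc n)) s T))" for y s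
    unfolding sum.lessThan_Suc_shift chain_Cons by (simp add: add.assoc)
  have "(\<integral>\<^sup>+s. (\<Sum>n<Suc T. c (chain x0 F s n)) + \<Phi> (chain x0 F s (Suc T)) \<partial>stream_space (measure_pmf p))
     = (\<integral>\<^sup>+y. \<integral>\<^sup>+s. c x0 + ((\<Sum>n<T. c (chain (F 0 x0 y) (\<lambda>n. F (Suc n)) s n)) + \<Phi> (chain (F 0 x0 y) (\<lambda>n. F (Suc n)) s T)) \<partial>stream_space (measure_pmf p) \<partial>p)"
    by (subst prob_space.nn_integral_stream_space[OF measure_pmf.prob_space_axioms meas]) (simp only: eq)
  also have "\<dots> \<le> (\<integral>\<^sup>+y. c x0 + \<Phi> (F 0 x0 y) \<partial>p)"
  proof (intro nn_integral_mono)
    fix y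
    interpret S: prob_space "stream_space (measure_pmf p)"
      by (rule prob_space.prob_space_stream_space[OF measure_pmf.prob_space_axioms])
    have C2: "F 0 x0 y \<in> C" using C' by auto
    have "(\<integral>\<^sup>+s. c x0 + ((\<Sum>n<T. c (chain (F 0 x0 y) (\<lambda>n. F (Suc n)) s n)) + \<Phi> (chain (F 0 x0 y) (\<lambda>n. F (Suc n)) s T)) \<partial>stream_space (measure_pmf p))
      = c x0 + (\<integral>\<^sup>+s. (\<Sum>n<T. c (chain (F 0 x0 y) (\<lambda>n. F (Suc n)) s n)) + \<Phi> (chain (F 0 x0 y) (\<lambda>n. F (Suc n)) s T) \<partial>stream_space (measure_pmf p))"
    proof -
      have m: "(\<lambda>s. (\<Sum>n<T. c (chain (F 0 x0 y) (\<lambda>n. F (Suc n)) s n)) + \<Phi> (chain (F 0 x0 y) (\<lambda>n. F (Suc n)) s T))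
         \<in> borel_measurable (stream_space (measure_pmf p))"
        using chain_fun_measurable[OF C'(1) C2, of "\<lambda>n. F (Suc n)"] C' by measurable
      show ?thesis using m by (subst nn_integral_add) (auto simp: S.emeasure_space_1)
    qed
    also have "\<dots> \<le> c x0 + \<Phi> (F 0 x0 y)"
      using Suc.IH[OF C'(1) C2, of "\<lambda>n. F (Suc n)"] C' Suc.prems(4) by (auto intro: add_left_mono)
    finally show "(\<integral>\<^sup>+s. c x0 + ((\<Sum>n<T. c (chain (F 0 x0 y) (\<lambda>n. F (Suc n)) s n)) + \<Phi> (chain (F 0 x0 y) (\<lambda>n. F (Suc n)) s T)) \<partial>stream_space (measure_pmf p))
      \<le> c x0 + \<Phi> (F 0 x0 y)" .
  qed
  also have "\<dots> = c x0 + (\<integral>\<^sup>+y. \<Phi> (F 0 x0 y) \<partial>p)"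
    by (subst nn_integral_add) (auto simp: measure_pmf.emeasure_space_1)
  also have "\<dots> \<le> \<Phi> x0" using Suc.prems(4)[OF C'(2)] .
  finally show ?case .
qed

lemma chain_bound:
  fixes p :: "'r pmf" and c \<Phi> :: "'s \<Rightarrow> ennreal"
  assumes C: "countable C" "x0 \<in> C" "\<And>n st y. st \<in> C \<Longrightarrow> F n st y \<in> C"
    and step: "\<And>n st. st \<in> C \<Longrightarrow> c st + (\<integral>\<^sup>+y. \<Phi> (F n st y) \<partial>p) \<le> \<Phi> st"
  shows "(\<integral>\<^sup>+s. (\<Sum>n. c (chain x0 F s n)) \<partial>stream_space (measure_pmf p)) \<le> \<Phi> x0"
proof -
  have "(\<integral>\<^sup>+s. (\<Sum>n. c (chain x0 F s n)) \<partial>stream_space (measure_pmf p))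
      = (\<Sum>n. \<integral>\<^sup>+s. c (chain x0 F s n) \<partial>stream_space (measure_pmf p))"
    using chain_fun_measurable[OF C] by (subst nn_integral_suminf) auto
  also have "\<dots> \<le> \<Phi> x0"
    unfolding suminf_eq_SUP
  proof (rule SUP_least)
    fix T
    have "(\<Sum>n<T. \<integral>\<^sup>+s. c (chain x0 F s n) \<partial>stream_space (measure_pmf p))
        = (\<integral>\<^sup>+s. (\<Sum>n<T. c (chain x0 F s n)) \<partial>stream_space (measure_pmf p))"
      using chain_fun_measurable[OF C] by (subst nn_integral_sum) auto
    also have "\<dots> \<le> (\<integral>\<^sup>+s. (\<Sum>n<T. c (chain x0 F s n)) + \<Phi> (chain x0 F s T) \<partial>stream_space (measure_pmf p))"
      by (intro nn_integral_mono) simp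
    also have "\<dots> \<le> \<Phi> x0" by (rule chain_bound_T[OF C step])
    finally show "(\<Sum>n<T. \<integral>\<^sup>+s. c (chain x0 F s n) \<partial>stream_space (measure_pmf p)) \<le> \<Phi> x0" .
  qed
  finally show ?thesis .
qed

definition hintE :: "algo \<Rightarrow> nat \<Rightarrow> nat \<Rightarrow> (weights \<Rightarrow> assignment)
    \<Rightarrow> ((nat \<Rightarrow> nat \<Rightarrow> nat) \<Rightarrow> assignment \<Rightarrow> nat) \<Rightarrow> nat \<Rightarrow> hstate \<Rightarrow> bool \<Rightarrow> nat \<Rightarrow> nat \<Rightarrow> nat \<Rightarrow> bool" where
  "hintE alg M K hung sel t st c r m k =
     (let mh = muhat st; d = dval t st; G = hung mh; G' = hung d;
          hon = (utility M G' d > utility M G mh);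
          H = hint_matching alg M K sel st G' c r in hon \<and> m \<in> {1..M} \<and> H m = k)"

definition pullE :: "nat \<Rightarrow> (weights \<Rightarrow> assignment) \<Rightarrow> hstate \<Rightarrow> nat \<Rightarrow> nat \<Rightarrow> bool" where
  "pullE M hung st m k = (let G = hung (muhat st) in
      m \<in> {1..M} \<and> G m = k \<and> (\<forall>m'\<in>{1..M}. m' \<noteq> m \<longrightarrow> G m' \<noteq> k))"

lemma step_eq:
  "step alg M K hung sel t st (c, r, h, p) =
    (\<lambda>m k. fst st m k + (if hintE alg M K hung sel t st c r m k then 1 else 0) + (if pullE M hung st m k then 1 else 0),
     \<lambda>m k. snd st m k + (if hintE alg M K hung sel t st c r m k \<and> h (m, k) then 1 else 0)
                       + (if pullE M hung st m k \<and> p (m, k) then 1 else 0))"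
  by (simp add: step_def hintE_def pullE_def Let_def)

lemma finite_hintE: "finite {(m, k). hintE alg M K hung sel t st c r m k}"
proof -
  have "{(m, k). hintE alg M K hung sel t st c r m k} \<subseteq>
     (\<lambda>m. (m, hint_matching alg M K sel st (hung (dval t st)) c r m)) ` {1..M}"
    by (auto simp: hintE_def Let_def)
  thus ?thesis by (rule finite_subset) simp
qed

lemma finite_pullE: "finite {(m, k). pullE M hung st m k}"
proof -
  have "{(m, k). pullE M hung st m k} \<subseteq> (\<lambda>m. (m, hung (muhat st) m)) ` {1..M}"
    by (auto simp: pullE_def Let_def)
  thus ?thesis by (rule finite_subset) simp
qed

lemma finite_conj: "finite {(m, k). P m k} \<Longrightarrow> finite {(m, k). P m k \<and> Q m k}"
  by (rule finite_subset[rotated]) auto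

lemma count_list_distinct: "distinct l \<Longrightarrow> count_list l x = (if x \<in> set l then 1 else 0)"
  by (induction l) auto

lemma finite_count: "finite A \<Longrightarrow> \<exists>l. \<forall>x. count_list l x = (if x \<in> A then 1 else 0)"
  using finite_distinct_list[of A] count_list_distinct by metis

definition cnt :: "(nat \<times> nat) list \<Rightarrow> nat \<Rightarrow> nat \<Rightarrow> nat" where
  "cnt l = (\<lambda>m k. count_list l (m, k))"

definition Cst :: "hstate set" where
  "Cst = (\<lambda>(l1, l2). (cnt l1, cnt l2)) ` UNIV"

lemma countable_Cst: "countable Cst"
  unfolding Cst_def by simp

lemma cnt_add:
  assumes "finite {(m, k). P m k}"
  shows "\<exists>l'. cnt l' = (\<lambda>m k. cnt l m k + (if P m k then 1 else 0))"
proof -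
  obtain la where la: "\<forall>x. count_list la x = (if x \<in> {(m, k). P m k} then 1 else 0)"
    using finite_count[OF assms] by blast
  show ?thesis by (rule exI[of _ "l @ la"]) (auto simp: cnt_def la fun_eq_iff)
qed

lemma Cst_step: "st \<in> Cst \<Longrightarrow> step alg M K hung sel t st \<omega> \<in> Cst"
proof -
  assume "st \<in> Cst"
  then obtain l1 l2 where st: "st = (cnt l1, cnt l2)" by (auto simp: Cst_def)
  obtain c r h p where \<omega>: "\<omega> = (c, r, h, p)" by (cases \<omega>) auto
  let ?A = "\<lambda>m k. hintE alg M K hung sel t st c r m k" and ?B = "\<lambda>m k. pullE M hung st m k"
  obtain a1 where a1: "cnt a1 = (\<lambda>m k. cnt l1 m k + (if ?A m k then 1 else 0))"
    using cnt_add[OF finite_hintE] by blast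
  obtain a2 where a2: "cnt a2 = (\<lambda>m k. cnt a1 m k + (if ?B m k then 1 else 0))"
    using cnt_add[OF finite_pullE] by blast
  obtain b1 where b1: "cnt b1 = (\<lambda>m k. cnt l2 m k + (if ?A m k \<and> h (m, k) then 1 else 0))"
    using cnt_add[OF finite_conj[OF finite_hintE, where Q="\<lambda>m k. h (m, k)"], of l2] by blast
  obtain b2 where b2: "cnt b2 = (\<lambda>m k. cnt b1 m k + (if ?B m k \<and> p (m, k) then 1 else 0))"
    using cnt_add[OF finite_conj[OF finite_pullE, where Q="\<lambda>m k. p (m, k)"], of b1] by blast
  have "step alg M K hung sel t st \<omega> = (cnt a2, cnt b2)"
    unfolding \<omega> step_eq by (simp add: a1 a2 b1 b2 st)
  thus ?thesis by (auto simp: Cst_def)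
qed

lemma init_Cst: "((\<lambda>_ _. 0), (\<lambda>_ _. 0)) \<in> Cst"
  unfolding Cst_def by (rule image_eqI[of _ _ "([], [])"]) (auto simp: cnt_def fun_eq_iff)

definition Phi :: "weights \<Rightarrow> real \<Rightarrow> nat \<Rightarrow> nat \<Rightarrow> hstate \<Rightarrow> ennreal" where
  "Phi \<mu> \<epsilon> M K st = (\<Sum>(m, k)\<in>{1..M} \<times> {1..K}. Vf (\<mu> m k) \<epsilon> (fst st m k) (snd st m k))"

definition cost :: "nat \<Rightarrow> weights \<Rightarrow> (weights \<Rightarrow> assignment) \<Rightarrow> real \<Rightarrow> hstate \<Rightarrow> ennreal" where
  "cost M \<mu> hung \<delta> st = (if \<delta> \<le> \<bar>utility M (hung (muhat st)) (muhat st) - utility M (hung (muhat st)) \<mu>\<bar> then 1 else 0)"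

lemma utility_matching:
  assumes "G \<in> matchings M K"
  shows "utility M G w = (\<Sum>m\<in>{1..M}. w m (G m))"
proof -
  have inj: "inj_on G {1..M}" using assms by (simp add: matchings_def)
  have "\<And>m. m \<in> {1..M} \<Longrightarrow> (\<forall>m'\<in>{1..M}. m' \<noteq> m \<longrightarrow> G m' \<noteq> G m)"
    using inj by (metis inj_on_def)
  then show ?thesis unfolding utility_def
    by (intro sum.cong refl) simp
qed
lemma cost_le:
  assumes hung: "is_hungarian M K hung" and M: "1 \<le> M" and d: "\<delta> > 0"
  shows "cost M \<mu> hung \<delta> st \<le> (\<Sum>(m, k)\<in>{1..M} \<times> {1..K}.
     (if pullE M hung st m k \<and> badf (\<mu> m k) (\<delta> / real M) (fst st m k) (snd st m k) then 1 else 0))"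
proof (cases "\<delta> \<le> \<bar>utility M (hung (muhat st)) (muhat st) - utility M (hung (muhat st)) \<mu>\<bar>")
  case False
  then show ?thesis by (simp add: cost_def)
next
  case True
  define G where "G = hung (muhat st)"
  have G: "G \<in> matchings M K" using hung by (simp add: is_hungarian_def G_def)
  hence inj: "inj_on G {1..M}" by (simp add: matchings_def)
  have GA: "G \<in> {1..M} \<rightarrow>\<^sub>E {1..K}" using G by (simp add: matchings_def assignments_def)
  have GK: "G m \<in> {1..K}" if "m \<in> {1..M}" for m using GA that by blast
  have "\<exists>m\<in>{1..M}. \<delta> / real M \<le> \<bar>muhat st m (G m) - \<mu> m (G m)\<bar>"
  proof (rule ccontr)
    assume "\<not> ?thesis"
    hence lt: "\<And>m. m \<in> {1..M} \<Longrightarrow> \<bar>muhat st m (G m) - \<mu> m (G m)\<bar> < \<delta> / real M" by (auto simp: not_le)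
    have "\<bar>utility M G (muhat st) - utility M G \<mu>\<bar> = \<bar>\<Sum>m\<in>{1..M}. muhat st m (G m) - \<mu> m (G m)\<bar>"
      by (simp add: utility_matching[OF G] sum_subtractf)
    also have "\<dots> \<le> (\<Sum>m\<in>{1..M}. \<bar>muhat st m (G m) - \<mu> m (G m)\<bar>)" by (rule sum_abs)
    also have "\<dots> < (\<Sum>m\<in>{1..M}. \<delta> / real M)"
      using M by (intro sum_strict_mono lt) simp_all
    also have "\<dots> = \<delta>" using M by simp
    finally show False using True G_def by simp
  qed
  then obtain m where m: "m \<in> {1..M}" and bd: "\<delta> / real M \<le> \<bar>muhat st m (G m) - \<mu> m (G m)\<bar>" by blast
  have pe: "pullE M hung st m (G m)"
    using m inj unfolding pullE_def Let_def G_def[symmetric] inj_on_def by blast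
  have bf: "badf (\<mu> m (G m)) (\<delta> / real M) (fst st m (G m)) (snd st m (G m))"
    using bd by (simp add: badf_def muhat_def)
  have mem: "(m, G m) \<in> {1..M} \<times> {1..K}" using m GK by auto
  have "cost M \<mu> hung \<delta> st = 1" using True by (simp add: cost_def)
  also have "(1::ennreal) = (\<lambda>(m, k). (if pullE M hung st m k \<and> badf (\<mu> m k) (\<delta> / real M) (fst st m k) (snd st m k) then 1 else 0)) (m, G m)"
    using pe bf by simp
  also have "\<dots> \<le> (\<Sum>(m, k)\<in>{1..M} \<times> {1..K}.
     (if pullE M hung st m k \<and> badf (\<mu> m k) (\<delta> / real M) (fst st m k) (snd st m k) then 1 else 0))"
    by (rule member_le_sum[OF mem]) auto
  finally show ?thesis .
qed

lemma pi_comp: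
  assumes "finite A" "e \<in> A"
  shows "(\<integral>\<^sup>+h. g (h e) \<partial>Pi_pmf A dflt P) = (\<integral>\<^sup>+y. g y \<partial>P e)"
proof -
  have "(\<integral>\<^sup>+h. g (h e) \<partial>Pi_pmf A dflt P) = (\<integral>\<^sup>+y. g y \<partial>map_pmf (\<lambda>h. h e) (Pi_pmf A dflt P))"
    by simp
  also have "map_pmf (\<lambda>h. h e) (Pi_pmf A dflt P) = P e"
    using assms by (simp add: Pi_pmf_component)
  finally show ?thesis .
qed

lemma avg_le:
  fixes q :: "'a pmf"
  assumes "\<And>x. a + f x \<le> (b::ennreal)"
  shows "a + (\<integral>\<^sup>+x. f x \<partial>q) \<le> b"
proof -
  have "a + (\<integral>\<^sup>+x. f x \<partial>q) = (\<integral>\<^sup>+x. a + f x \<partial>q)"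
    by (subst nn_integral_add) (auto simp: measure_pmf.emeasure_space_1)
  also have "\<dots> \<le> (\<integral>\<^sup>+x. b \<partial>q)" by (intro nn_integral_mono assms)
  also have "\<dots> = b" by (simp add: measure_pmf.emeasure_space_1)
  finally show ?thesis .
qed

lemma step_ineq:
  assumes mu: "\<forall>m\<in>{1..M}. \<forall>k\<in>{1..K}. 0 \<le> \<mu> m k \<and> \<mu> m k \<le> 1"
    and hung: "is_hungarian M K hung" and M: "1 \<le> M" and d: "\<delta> > 0"
  shows "cost M \<mu> hung \<delta> st + (\<integral>\<^sup>+\<omega>. Phi \<mu> (\<delta> / real M) M K (step alg M K hung sel t st \<omega>) \<partial>round_pmf M K \<mu>)
     \<le> Phi \<mu> (\<delta> / real M) M K st"
proof -
  let ?E = "{1..M} \<times> {1..K}"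
  let ?e = "\<delta> / real M"
  let ?P = "Pi_pmf ?E False (\<lambda>(m, k). bernoulli_pmf (\<mu> m k))"
  have fin: "finite ?E" by simp
  have main: "cost M \<mu> hung \<delta> st + (\<integral>\<^sup>+h. \<integral>\<^sup>+p. Phi \<mu> ?e M K (step alg M K hung sel t st (c, r, h, p)) \<partial>?P \<partial>?P)
     \<le> Phi \<mu> ?e M K st" for c r
  proof -
    let ?A = "\<lambda>m k. hintE alg M K hung sel t st c r m k" and ?B = "\<lambda>m k. pullE M hung st m k"
    define g where "g m k y1 y2 = Vf (\<mu> m k) ?e (fst st m k + (if ?A m k then 1 else 0) + (if ?B m k then 1 else 0))
          (snd st m k + (if ?A m k \<and> y1 then 1 else 0) + (if ?B m k \<and> y2 then 1 else 0))" for m k y1 y2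
    have "(\<integral>\<^sup>+h. \<integral>\<^sup>+p. Phi \<mu> ?e M K (step alg M K hung sel t st (c, r, h, p)) \<partial>?P \<partial>?P)
       = (\<integral>\<^sup>+h. \<integral>\<^sup>+p. (\<Sum>(m, k)\<in>?E. g m k (h (m, k)) (p (m, k))) \<partial>?P \<partial>?P)"
      by (simp add: Phi_def step_eq g_def)
    also have "\<dots> = (\<Sum>(m, k)\<in>?E. \<integral>\<^sup>+h. \<integral>\<^sup>+p. g m k (h (m, k)) (p (m, k)) \<partial>?P \<partial>?P)"
      by (simp add: nn_integral_sum case_prod_beta)
    also have "\<dots> = (\<Sum>(m, k)\<in>?E. \<integral>\<^sup>+y1. \<integral>\<^sup>+y2. g m k y1 y2 \<partial>bernoulli_pmf (\<mu> m k) \<partial>bernoulli_pmf (\<mu> m k))"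
    proof (intro sum.cong refl)
      fix x assume x: "x \<in> ?E"
      obtain m k where [simp]: "x = (m, k)" by (cases x) auto
      have "(\<integral>\<^sup>+h. \<integral>\<^sup>+p. g m k (h (m, k)) (p (m, k)) \<partial>?P \<partial>?P)
          = (\<integral>\<^sup>+h. \<integral>\<^sup>+y2. g m k (h (m, k)) y2 \<partial>bernoulli_pmf (\<mu> m k) \<partial>?P)"
      proof (intro nn_integral_cong)
        fix h :: "nat \<times> nat \<Rightarrow> bool"
        show "(\<integral>\<^sup>+p. g m k (h (m, k)) (p (m, k)) \<partial>?P) = (\<integral>\<^sup>+y2. g m k (h (m, k)) y2 \<partial>bernoulli_pmf (\<mu> m k))"
          using pi_comp[OF fin x, where g="g m k (h (m, k))" and dflt=False and P="\<lambda>(m, k). bernoulli_pmf (\<mu> m k)"] by simp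
      qed
      also have "\<dots> = (\<integral>\<^sup>+y1. \<integral>\<^sup>+y2. g m k y1 y2 \<partial>bernoulli_pmf (\<mu> m k) \<partial>bernoulli_pmf (\<mu> m k))"
        using pi_comp[OF fin x, where g="\<lambda>y1. \<integral>\<^sup>+y2. g m k y1 y2 \<partial>bernoulli_pmf (\<mu> m k)" and dflt=False and P="\<lambda>(m, k). bernoulli_pmf (\<mu> m k)"] by simp
      finally show "(case x of (m, k) \<Rightarrow> \<integral>\<^sup>+h. \<integral>\<^sup>+p. g m k (h (m, k)) (p (m, k)) \<partial>?P \<partial>?P) =
         (case x of (m, k) \<Rightarrow> \<integral>\<^sup>+y1. \<integral>\<^sup>+y2. g m k y1 y2 \<partial>bernoulli_pmf (\<mu> m k) \<partial>bernoulli_pmf (\<mu> m k))" by simp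
    qed
    finally have eq: "(\<integral>\<^sup>+h. \<integral>\<^sup>+p. Phi \<mu> ?e M K (step alg M K hung sel t st (c, r, h, p)) \<partial>?P \<partial>?P)
       = (\<Sum>(m, k)\<in>?E. \<integral>\<^sup>+y1. \<integral>\<^sup>+y2. g m k y1 y2 \<partial>bernoulli_pmf (\<mu> m k) \<partial>bernoulli_pmf (\<mu> m k))" .
    have "cost M \<mu> hung \<delta> st + (\<Sum>(m, k)\<in>?E. \<integral>\<^sup>+y1. \<integral>\<^sup>+y2. g m k y1 y2 \<partial>bernoulli_pmf (\<mu> m k) \<partial>bernoulli_pmf (\<mu> m k))
      \<le> (\<Sum>(m, k)\<in>?E. (if ?B m k \<and> badf (\<mu> m k) ?e (fst st m k) (snd st m k) then 1 else 0))
        + (\<Sum>(m, k)\<in>?E. \<integral>\<^sup>+y1. \<integral>\<^sup>+y2. g m k y1 y2 \<partial>bernoulli_pmf (\<mu> m k) \<partial>bernoulli_pmf (\<mu> m k))"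
      by (intro add_right_mono cost_le[OF hung M d])
    also have "\<dots> = (\<Sum>(m, k)\<in>?E. (if ?B m k \<and> badf (\<mu> m k) ?e (fst st m k) (snd st m k) then 1 else 0)
        + (\<integral>\<^sup>+y1. \<integral>\<^sup>+y2. g m k y1 y2 \<partial>bernoulli_pmf (\<mu> m k) \<partial>bernoulli_pmf (\<mu> m k)))"
      by (simp add: sum.distrib case_prod_beta)
    also have "\<dots> \<le> (\<Sum>(m, k)\<in>?E. Vf (\<mu> m k) ?e (fst st m k) (snd st m k))"
    proof (intro sum_mono)
      fix x assume x: "x \<in> ?E"
      obtain m k where [simp]: "x = (m, k)" by (cases x) auto
      have q: "\<mu> m k \<in> {0..1}" using mu x by auto
      show "(case x of (m, k) \<Rightarrow> (if ?B m k \<and> badf (\<mu> m k) ?e (fst st m k) (snd st m k) then 1 else 0)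
        + (\<integral>\<^sup>+y1. \<integral>\<^sup>+y2. g m k y1 y2 \<partial>bernoulli_pmf (\<mu> m k) \<partial>bernoulli_pmf (\<mu> m k)))
        \<le> (case x of (m, k) \<Rightarrow> Vf (\<mu> m k) ?e (fst st m k) (snd st m k))"
        using edge_step[OF q, where b="?B m k" and \<epsilon>="?e" and n="fst st m k" and a="?A m k" and s="snd st m k"] by (simp add: g_def)
    qed
    also have "\<dots> = Phi \<mu> ?e M K st" by (simp add: Phi_def)
    finally show ?thesis using eq by simp
  qed
  show ?thesis
    unfolding round_pmf_def
    apply (simp only: map_pmf_def[symmetric])
    apply (simp only: nn_integral_bind_pmf nn_integral_map_pmf)
    apply (rule avg_le)
    apply (rule avg_le)
    apply (rule main)
    done
qed

lemma bad_count_eq: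
  "emeasure (count_space UNIV) (bad_rounds alg M K \<mu> hung sel \<delta> \<omega>) =
   (\<Sum>n. cost M \<mu> hung \<delta> (hist alg M K hung sel \<omega> n))"
proof -
  let ?A = "bad_rounds alg M K \<mu> hung sel \<delta> \<omega>"
  have "emeasure (count_space UNIV) ?A = (\<integral>\<^sup>+t. indicator ?A t \<partial>count_space UNIV)"
    by (simp add: nn_integral_indicator)
  also have "\<dots> = (\<Sum>t. indicator ?A t)" by (rule nn_integral_count_space_nat)
  also have "\<dots> = (\<Sum>n. indicator ?A (n + 1)) + (\<Sum>n<1. indicator ?A n)"
    by (rule suminf_offset) simp
  also have "\<dots> = (\<Sum>n. cost M \<mu> hung \<delta> (hist alg M K hung sel \<omega> n))"
    by (simp add: bad_rounds_def cost_def indicator_def Let_def of_bool_def)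
  finally show ?thesis .
qed

lemma to_stream_snth: "to_stream \<omega> !! n = \<omega> n"
  by (simp add: to_stream_def)

lemma stl_to_stream_snth: "stl (to_stream \<omega>) !! n = \<omega> (Suc n)"
  by (metis snth.simps(2) to_stream_snth)

lemma hist_chain:
  "hist alg M K hung sel \<omega> n =
   chain (\<lambda>_ _. 0, \<lambda>_ _. 0) (\<lambda>n st y. step alg M K hung sel (Suc n) st y) (stl (to_stream \<omega>)) n"
  by (induction n) (simp_all add: stl_to_stream_snth)

lemma Phi_init_bound:
  assumes mu: "\<forall>m\<in>{1..M}. \<forall>k\<in>{1..K}. 0 \<le> \<mu> m k \<and> \<mu> m k \<le> 1"
    and M: "1 \<le> M" and d: "\<delta> > 0"
  shows "Phi \<mu> (\<delta> / real M) M K (\<lambda>_ _. 0, \<lambda>_ _. 0)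
     \<le> ennreal (4 * real M * real K + 2 * real M ^ 3 * real K / \<delta>\<^sup>2)"
proof -
  let ?e = "\<delta> / real M"
  have e: "?e > 0" using M d by simp
  have "Phi \<mu> ?e M K (\<lambda>_ _. 0, \<lambda>_ _. 0) = (\<Sum>(m, k)\<in>{1..M} \<times> {1..K}. Vf (\<mu> m k) ?e 0 0)"
    by (simp add: Phi_def)
  also have "\<dots> \<le> (\<Sum>x\<in>{1..M} \<times> {1..K}. ennreal (1 + 1 / ?e\<^sup>2))"
  proof (intro sum_mono)
    fix x assume x: "x \<in> {1..M} \<times> {1..K}"
    obtain m k where [simp]: "x = (m, k)" by (cases x) auto
    have q: "\<mu> m k \<in> {0..1}" using mu x by auto
    show "(case x of (m, k) \<Rightarrow> Vf (\<mu> m k) ?e 0 0) \<le> ennreal (1 + 1 / ?e\<^sup>2)"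
      using Vf_bound[OF q e] by simp
  qed
  also have "\<dots> = ennreal (real M * real K * (1 + 1 / ?e\<^sup>2))"
    by (simp add: ennreal_of_nat_eq_real_of_nat ennreal_mult'' mult.assoc)
  also have "\<dots> \<le> ennreal (4 * real M * real K + 2 * real M ^ 3 * real K / \<delta>\<^sup>2)"
  proof (intro ennreal_leI)
    have "real M * real K * (1 + 1 / ?e\<^sup>2) = real M * real K + real M ^ 3 * real K / \<delta>\<^sup>2"
      using M d by (simp add: field_simps power2_eq_square power3_eq_cube)
    also have "\<dots> \<le> 4 * real M * real K + 2 * real M ^ 3 * real K / \<delta>\<^sup>2"
    proof -
      have h: "0 \<le> real M ^ 3 * real K / \<delta>\<^sup>2" by simp
      have "2 * real M ^ 3 * real K / \<delta>\<^sup>2 = 2 * (real M ^ 3 * real K / \<delta>\<^sup>2)" by simp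
      moreover have "4 * real M * real K = 4 * (real M * real K)" "0 \<le> real M * real K" by simp_all
      ultimately show ?thesis using h by linarith
    qed
    finally show "real M * real K * (1 + 1 / ?e\<^sup>2) \<le> 4 * real M * real K + 2 * real M ^ 3 * real K / \<delta>\<^sup>2" .
  qed
  finally show ?thesis .
qed

theorem lemma4:
  fixes M K :: nat and \<mu> :: weights and \<delta> :: real and alg :: algo
    and hung :: "weights \<Rightarrow> assignment"
    and sel :: "(nat \<Rightarrow> nat \<Rightarrow> nat) \<Rightarrow> assignment \<Rightarrow> nat"
  assumes "1 \<le> M" and "M < K"
    and "\<forall>m\<in>{1..M}. \<forall>k\<in>{1..K}. 0 \<le> \<mu> m k \<and> \<mu> m k \<le> 1"
    and "\<exists>!G. G \<in> assignments M K \<and> (\<forall>G'\<in>assignments M K. utility M G' \<mu> \<le> utility M G \<mu>)"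
    and "is_hungarian M K hung"
    and "is_min_selector M sel"
    and "\<delta> > 0"
  shows "(\<integral>\<^sup>+ \<omega>. emeasure (count_space UNIV) (bad_rounds alg M K \<mu> hung sel \<delta> \<omega>) \<partial>process M K \<mu>)
           \<le> ennreal (4 * real M * real K + 2 * real M ^ 3 * real K / \<delta>\<^sup>2)"
proof -
  note M = assms(1) and mu = assms(3) and hung = assms(5) and d = assms(7)
  define p where "p = round_pmf M K \<mu>"
  define x0 where "x0 = ((\<lambda>_ _. 0, \<lambda>_ _. 0) :: hstate)"
  define F where "F = (\<lambda>n st y. step alg M K hung sel (Suc n) st y)"
  define c where "c = cost M \<mu> hung \<delta>"
  define g where "g s = (\<Sum>n. c (chain x0 F s n))" for s
  let ?S = "stream_space (measure_pmf p)"
  have C: "countable Cst" "x0 \<in> Cst" "\<And>n st y. st \<in> Cst \<Longrightarrow> F n st y \<in> Cst"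
    using countable_Cst init_Cst Cst_step unfolding x0_def F_def by auto
  have gm[measurable]: "g \<in> borel_measurable ?S"
    unfolding g_def by (intro borel_measurable_suminf_order chain_fun_measurable[OF C])
  have "(\<integral>\<^sup>+ \<omega>. emeasure (count_space UNIV) (bad_rounds alg M K \<mu> hung sel \<delta> \<omega>) \<partial>process M K \<mu>)
      = (\<integral>\<^sup>+ \<omega>. g (stl (to_stream \<omega>)) \<partial>(\<Pi>\<^sub>M i\<in>UNIV. measure_pmf p))"
    unfolding process_def p_def
    by (intro nn_integral_cong) (simp add: bad_count_eq hist_chain g_def c_def x0_def F_def)
  also have "\<dots> = (\<integral>\<^sup>+ s. g (stl s) \<partial>distr (\<Pi>\<^sub>M i\<in>UNIV. measure_pmf p) ?S to_stream)"
    by (rule nn_integral_distr[symmetric]) measurable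
  also have "\<dots> = (\<integral>\<^sup>+ s. g (stl s) \<partial>?S)"
    unfolding stream_space_eq_distr[symmetric] ..
  also have "\<dots> = (\<integral>\<^sup>+ y. \<integral>\<^sup>+ s. g s \<partial>?S \<partial>p)"
    by (subst prob_space.nn_integral_stream_space[OF measure_pmf.prob_space_axioms]) simp_all
  also have "\<dots> = (\<integral>\<^sup>+ s. g s \<partial>?S)"
    by (rule pmf_const_int)
  also have "\<dots> \<le> Phi \<mu> (\<delta> / real M) M K x0"
    unfolding g_def
  proof (rule chain_bound[OF C])
    fix n st
    show "c st + (\<integral>\<^sup>+y. Phi \<mu> (\<delta> / real M) M K (F n st y) \<partial>p) \<le> Phi \<mu> (\<delta> / real M) M K st"
      unfolding c_def F_def p_def by (rule step_ineq[OF mu hung M d])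
  qed
  also have "\<dots> \<le> ennreal (4 * real M * real K + 2 * real M ^ 3 * real K / \<delta>\<^sup>2)"
    unfolding x0_def by (rule Phi_init_bound[OF mu M d])
  finally show ?thesis .
qed

end
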